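(* Let $M$ be an exact $\mathfrak{K}$-module. The following are equivalent: (1) $M_0\cong\operatorname{im}\alpha_{01}\oplus\operatorname{im}\alpha_{02}$ (i.e. $M_0$ is the internal direct sum of these two subgroups); (2) $\ker\alpha_{01}=\ker N(s_1)$ and $\operatorname{im}\alpha_{10}=\operatorname{im}N(s_1)$; (3) $\ker\alpha_{02}=\ker(1-t_2)$ and $\operatorname{im}\alpha_{20}=\operatorname{im}(1-t_2)$. These equivalent conditions hold if the $\mathfrak{S}$-module $(M_1,s_1)$ is cohomologically trivial or if the $\mathfrak{S}_2$-module $(M_2,s_2,t_2)$ is cohomologically trivial.
   Context: Fix a prime $p$, $N(x)=1+x+\dots+x^{p-1}$, $\mathfrak{S}=\mathbb{Z}[t]/(t^p-1)$, $\mathfrak{S}_2=\mathbb{Z}[s,t]/((1-s)(1-t),N(s)+N(t)-p)$. A $\mathfrak{K}$-module $M$ amounts to $\mathbb{Z}/2$-graded abelian groups $M_0,M_1,M_2$ with homomorphisms $\alpha_{jk}\colon M_k\to M_j$ ($j\neq k$; $\alpha_{12},\alpha_{21}$ grading-reversing, others grading-preserving) with $\alpha_{jk}\alpha_{km}=0$ for $\{j,k,m\}=\{0,1,2\}$ and, for $t_0:=1-\alpha_{02}\alpha_{20}$ on $M_0$, $s_1:=1-\alpha_{12}\alpha_{21}$ on $M_1$, $t_2:=1-\alpha_{20}\alpha_{02}$, $s_2:=1-\alpha_{21}\alpha_{12}$ on $M_2$: $\alpha_{01}\alpha_{10}=N(t_0)$, $\alpha_{10}\alpha_{01}=N(s_1)$,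 $N(t_2)+N(s_2)=p$ (so $(M_2,s_2,t_2)$ is an $\mathfrak{S}_2$-module). $M$ is exact if the cyclic sequences $M_0\xrightarrow{\alpha_{10}}M_1\xrightarrow{\alpha_{21}}M_2\xrightarrow{\alpha_{02}}M_0$ and $M_0\xrightarrow{\alpha_{20}}M_2\xrightarrow{\alpha_{12}}M_1\xrightarrow{\alpha_{01}}M_0$ are exact. An $\mathfrak{S}$-module $(L,t)$ is cohomologically trivial if $\ker(1-t)=\operatorname{im}N(t)$ and $\operatorname{im}(1-t)=\ker N(t)$; an $\mathfrak{S}_2$-module $(L,s,t)$ is cohomologically trivial if $\operatorname{im}(1-t)=\ker(1-s)$ and $\operatorname{im}(1-s)=\ker(1-t)$. *)

theory Defs
  imports "HOL-Computational_Algebra.Primes"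
begin

text \<open>Abelian groups are modelled as types of class ab_group_add (the whole type is the group);
homomorphisms as additive functions; an endomorphism f acts, and polynomial expressions
in f (like N(f) and 1 - f) are evaluated pointwise.\<close>

definition additive :: "('a::ab_group_add \<Rightarrow> 'b::ab_group_add) \<Rightarrow> bool" where
  "additive f \<longleftrightarrow> (\<forall>x y. f (x + y) = f x + f y)"

definition kernel :: "('a \<Rightarrow> 'b::zero) \<Rightarrow> 'a set" where
  "kernel f = {x. f x = 0}"

definition Nop :: "nat \<Rightarrow> ('a::ab_group_add \<Rightarrow> 'a) \<Rightarrow> 'a \<Rightarrow> 'a" where
  "Nop p f x = (\<Sum>i<p. (f ^^ i) x)"

definition one_minus :: "('a::ab_group_add \<Rightarrow> 'a) \<Rightarrow> 'a \<Rightarrow> 'a" where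
  "one_minus f x = x - f x"

definition subgrp :: "'a::ab_group_add set \<Rightarrow> bool" where
  "subgrp A \<longleftrightarrow> 0 \<in> A \<and> (\<forall>x\<in>A. \<forall>y\<in>A. x + y \<in> A) \<and> (\<forall>x\<in>A. - x \<in> A)"

definition internal_direct_sum :: "'a::ab_group_add set \<Rightarrow> 'a set \<Rightarrow> bool" where
  "internal_direct_sum A B \<longleftrightarrow> subgrp A \<and> subgrp B \<and>
     (\<forall>x. \<exists>!uv. fst uv \<in> A \<and> snd uv \<in> B \<and> x = fst uv + snd uv)"

text \<open>A Z/2-grading of an abelian group: the group is the internal direct sum of the
degree-0 part G0 and the degree-1 part G1.\<close>
definition graded :: "'a::ab_group_add set \<Rightarrow> 'a set \<Rightarrow> bool" where
  "graded G0 G1 \<longleftrightarrow> internal_direct_sum G0 G1"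

definition grading_preserving where
  "grading_preserving A0 A1 B0 B1 f \<longleftrightarrow> f ` A0 \<subseteq> B0 \<and> f ` A1 \<subseteq> B1"

definition grading_reversing where
  "grading_reversing A0 A1 B0 B1 f \<longleftrightarrow> f ` A0 \<subseteq> B1 \<and> f ` A1 \<subseteq> B0"

text \<open>A K-module: graded groups M0 (grading A0,A1), M1 (B0,B1), M2 (C0,C1) and maps
a_jk : M_k \<rightarrow> M_j.\<close>
definition K_module ::
  "nat \<Rightarrow> 'a::ab_group_add set \<Rightarrow> 'a set \<Rightarrow> 'b::ab_group_add set \<Rightarrow> 'b set \<Rightarrow> 'c::ab_group_add set \<Rightarrow> 'c set
   \<Rightarrow> ('b \<Rightarrow> 'a) \<Rightarrow> ('c \<Rightarrow> 'a) \<Rightarrow> ('a \<Rightarrow> 'b) \<Rightarrow> ('c \<Rightarrow> 'b) \<Rightarrow> ('a \<Rightarrow> 'c) \<Rightarrow> ('b \<Rightarrow> 'c) \<Rightarrow> bool" where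
  "K_module p A0 A1 B0 B1 C0 C1 a01 a02 a10 a12 a20 a21 \<longleftrightarrow>
     graded A0 A1 \<and> graded B0 B1 \<and> graded C0 C1 \<and>
     additive a01 \<and> additive a02 \<and> additive a10 \<and> additive a12 \<and> additive a20 \<and> additive a21 \<and>
     grading_preserving B0 B1 A0 A1 a01 \<and> grading_preserving A0 A1 B0 B1 a10 \<and>
     grading_preserving C0 C1 A0 A1 a02 \<and> grading_preserving A0 A1 C0 C1 a20 \<and>
     grading_reversing C0 C1 B0 B1 a12 \<and> grading_reversing B0 B1 C0 C1 a21 \<and>
     (\<forall>x. a01 (a12 x) = 0) \<and> (\<forall>x. a02 (a21 x) = 0) \<and>
     (\<forall>x. a10 (a02 x) = 0) \<and> (\<forall>x. a12 (a20 x) = 0) \<and>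
     (\<forall>x. a20 (a01 x) = 0) \<and> (\<forall>x. a21 (a10 x) = 0) \<and>
     (\<forall>x. a01 (a10 x) = Nop p (\<lambda>y. y - a02 (a20 y)) x) \<and>
     (\<forall>x. a10 (a01 x) = Nop p (\<lambda>y. y - a12 (a21 y)) x) \<and>
     (\<forall>x. Nop p (\<lambda>y. y - a20 (a02 y)) x + Nop p (\<lambda>y. y - a21 (a12 y)) x = (\<Sum>i<p. x))"

definition exact_K_module where
  "exact_K_module p A0 A1 B0 B1 C0 C1 a01 a02 a10 a12 a20 a21 \<longleftrightarrow>
     K_module p A0 A1 B0 B1 C0 C1 a01 a02 a10 a12 a20 a21 \<and>
     kernel a21 = range a10 \<and> kernel a02 = range a21 \<and> kernel a10 = range a02 \<and>
     kernel a12 = range a20 \<and> kernel a01 = range a12 \<and> kernel a20 = range a01"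

definition coh_trivial_S :: "nat \<Rightarrow> ('a::ab_group_add \<Rightarrow> 'a) \<Rightarrow> bool" where
  "coh_trivial_S p t \<longleftrightarrow> kernel (one_minus t) = range (Nop p t) \<and>
                          range (one_minus t) = kernel (Nop p t)"

definition coh_trivial_S2 :: "('a::ab_group_add \<Rightarrow> 'a) \<Rightarrow> ('a \<Rightarrow> 'a) \<Rightarrow> bool" where
  "coh_trivial_S2 s t \<longleftrightarrow> range (one_minus t) = kernel (one_minus s) \<and>
                          range (one_minus s) = kernel (one_minus t)"

end

theory Submission
  imports Defs
begin

lemma add_props:
  assumes "additive f"
  shows "f 0 = 0" "f (- x) = - f x" "f (x - y) = f x - f y"
proof -
  have a: "\<And>x y. f (x + y) = f x + f y" using assms by (simp add: additive_def)
  have "f (0 + 0) = f 0 + f 0" by (rule a)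
  then show z: "f 0 = 0" by simp
  have "f (x + - x) = f x + f (- x)" by (rule a)
  then have "f x + f (- x) = f x + - f x" using z by simp
  then show "f (- x) = - f x" by (rule add_left_imp_eq)
  have "f ((x - y) + y) = f (x - y) + f y" by (rule a)
  then show "f (x - y) = f x - f y" by (simp add: algebra_simps)
qed

lemma range_subgrp: "additive f \<Longrightarrow> subgrp (range f)"
proof -
  assume a: "additive f"
  have "0 \<in> range f" using add_props(1)[OF a] by (metis rangeI)
  moreover have "\<forall>x\<in>range f. \<forall>y\<in>range f. x + y \<in> range f"
  proof (intro ballI)
    fix x y assume "x \<in> range f" "y \<in> range f"
    then obtain u v where "x = f u" "y = f v" by blast
    then have "x + y = f (u + v)" using a by (simp add: additive_def)
    then show "x + y \<in> range f" by simp
  qed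
  moreover have "\<forall>x\<in>range f. - x \<in> range f"
  proof
    fix x assume "x \<in> range f"
    then obtain u where "x = f u" by blast
    then have "- x = f (- u)" using add_props(2)[OF a] by simp
    then show "- x \<in> range f" by simp
  qed
  ultimately show ?thesis unfolding subgrp_def by blast
qed

lemma ids:
  assumes "subgrp A" "subgrp B"
  shows "internal_direct_sum A B \<longleftrightarrow> (A \<inter> B \<subseteq> {0} \<and> (\<forall>x. \<exists>a\<in>A. \<exists>b\<in>B. x = a + b))"
proof
  assume h: "internal_direct_sum A B"
  have u: "\<forall>x. \<exists>!uv. fst uv \<in> A \<and> snd uv \<in> B \<and> x = fst uv + snd uv"
    using h by (simp add: internal_direct_sum_def)
  have "A \<inter> B \<subseteq> {0}"
  proof
    fix z assume z: "z \<in> A \<inter> B"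
    have "0 \<in> A" "0 \<in> B" using assms by (auto simp: subgrp_def)
    then have "(z, 0) = (0, z)" using u[rule_format, of z] z
      by (metis (no_types, lifting) IntD1 IntD2 add.right_neutral add_0 fst_conv snd_conv)
    then show "z \<in> {0}" by simp
  qed
  moreover have "\<forall>x. \<exists>a\<in>A. \<exists>b\<in>B. x = a + b" using u by metis
  ultimately show "A \<inter> B \<subseteq> {0} \<and> (\<forall>x. \<exists>a\<in>A. \<exists>b\<in>B. x = a + b)" by blast
next
  assume h: "A \<inter> B \<subseteq> {0} \<and> (\<forall>x. \<exists>a\<in>A. \<exists>b\<in>B. x = a + b)"
  have "\<exists>!uv. fst uv \<in> A \<and> snd uv \<in> B \<and> x = fst uv + snd uv" for x
  proof -
    obtain a b where ab: "a \<in> A" "b \<in> B" "x = a + b" using h by blast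
    show ?thesis
    proof (rule ex1I[of _ "(a,b)"])
      show "fst (a, b) \<in> A \<and> snd (a, b) \<in> B \<and> x = fst (a, b) + snd (a, b)" using ab by simp
    next
      fix uv assume uv: "fst uv \<in> A \<and> snd uv \<in> B \<and> x = fst uv + snd uv"
      have "a + - fst uv \<in> A" using assms(1) ab uv unfolding subgrp_def by blast
      moreover have "snd uv + - b \<in> B" using assms(2) ab uv unfolding subgrp_def by blast
      moreover have "a + - fst uv = snd uv + - b" using ab uv by (simp add: algebra_simps)
      ultimately have "a + - fst uv = 0" "snd uv + - b = 0" using h by auto
      then have "fst uv = a" "snd uv = b" by (simp_all add: add_eq_0_iff2 neg_eq_iff_add_eq_0 eq_neg_iff_add_eq_0)
      then show "uv = (a, b)" by (metis prod.collapse)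
    qed
  qed
  then show "internal_direct_sum A B" using assms by (simp add: internal_direct_sum_def)
qed

lemma key1:
  assumes "additive f" "additive g"
  shows "kernel g = kernel (\<lambda>x. f (g x)) \<longleftrightarrow> range g \<inter> kernel f \<subseteq> {0}"
  using add_props(1)[OF assms(1)] add_props(1)[OF assms(2)]
  unfolding kernel_def by auto

lemma key2:
  assumes "additive f" "additive g"
  shows "range f = range (\<lambda>x. f (g x)) \<longleftrightarrow> (\<forall>x. \<exists>u\<in>range g. \<exists>v\<in>kernel f. x = u + v)"
proof
  assume h: "range f = range (\<lambda>x. f (g x))"
  show "\<forall>x. \<exists>u\<in>range g. \<exists>v\<in>kernel f. x = u + v"
  proof
    fix x
    obtain y where y: "f x = f (g y)" using h by (metis rangeI image_iff)
    have "f (x - g y) = 0" using y add_props(3)[OF assms(1)] by simp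
    then show "\<exists>u\<in>range g. \<exists>v\<in>kernel f. x = u + v"
      by (intro bexI[of _ "g y"] bexI[of _ "x - g y"]) (auto simp: kernel_def)
  qed
next
  assume h: "\<forall>x. \<exists>u\<in>range g. \<exists>v\<in>kernel f. x = u + v"
  show "range f = range (\<lambda>x. f (g x))"
  proof
    show "range f \<subseteq> range (\<lambda>x. f (g x))"
    proof
      fix z assume "z \<in> range f"
      then obtain x where x: "z = f x" by blast
      obtain u v where uv: "u \<in> range g" "v \<in> kernel f" "x = u + v" using h by blast
      obtain y where "u = g y" using uv by blast
      then have "z = f (g y)" using x uv assms(1) by (simp add: additive_def kernel_def)
      then show "z \<in> range (\<lambda>x. f (g x))" by blast
    qed
  qed blast
qed

theorem lemma7p9:
  fixes p :: nat
    and A0 A1 :: "'a::ab_group_add set" and B0 B1 :: "'b::ab_group_add set"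
    and C0 C1 :: "'c::ab_group_add set"
    and a01 :: "'b \<Rightarrow> 'a" and a02 :: "'c \<Rightarrow> 'a" and a10 :: "'a \<Rightarrow> 'b"
    and a12 :: "'c \<Rightarrow> 'b" and a20 :: "'a \<Rightarrow> 'c" and a21 :: "'b \<Rightarrow> 'c"
  assumes "prime p"
    and "exact_K_module p A0 A1 B0 B1 C0 C1 a01 a02 a10 a12 a20 a21"
  defines "s1 \<equiv> (\<lambda>y. y - a12 (a21 y))"
    and "s2 \<equiv> (\<lambda>y. y - a21 (a12 y))"
    and "t2 \<equiv> (\<lambda>y. y - a20 (a02 y))"
  shows "(internal_direct_sum (range a01) (range a02) \<longleftrightarrow>
            (kernel a01 = kernel (Nop p s1) \<and> range a10 = range (Nop p s1)))
       \<and> ((kernel a01 = kernel (Nop p s1) \<and> range a10 = range (Nop p s1)) \<longleftrightarrow>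
            (kernel a02 = kernel (one_minus t2) \<and> range a20 = range (one_minus t2)))
       \<and> ((coh_trivial_S p s1 \<or> coh_trivial_S2 s2 t2) \<longrightarrow>
            internal_direct_sum (range a01) (range a02))"
proof -
  have K: "K_module p A0 A1 B0 B1 C0 C1 a01 a02 a10 a12 a20 a21"
    and ex: "kernel a21 = range a10" "kernel a02 = range a21" "kernel a10 = range a02"
      "kernel a12 = range a20" "kernel a01 = range a12" "kernel a20 = range a01"
    using assms(2) by (auto simp: exact_K_module_def)
  have ad: "additive a01" "additive a02" "additive a10" "additive a12" "additive a20" "additive a21"
    using K by (auto simp: K_module_def)
  have z: "\<And>x. a01 (a12 x) = 0" "\<And>x. a02 (a21 x) = 0" "\<And>x. a10 (a02 x) = 0"
    "\<And>x. a12 (a20 x) = 0" "\<And>x. a20 (a01 x) = 0" "\<And>x. a21 (a10 x) = 0"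
    using K by (auto simp: K_module_def)
  have N1: "Nop p s1 = (\<lambda>x. a10 (a01 x))"
    using K unfolding K_module_def s1_def by auto
  have T2: "one_minus t2 = (\<lambda>x. a20 (a02 x))"
    unfolding one_minus_def t2_def by auto
  have OS1: "one_minus s1 = (\<lambda>x. a12 (a21 x))"
    unfolding one_minus_def s1_def by auto
  have OS2: "one_minus s2 = (\<lambda>x. a21 (a12 x))"
    unfolding one_minus_def s2_def by auto
  have D: "internal_direct_sum (range a01) (range a02) \<longleftrightarrow>
     (range a01 \<inter> range a02 \<subseteq> {0} \<and> (\<forall>x. \<exists>a\<in>range a01. \<exists>b\<in>range a02. x = a + b))"
    by (rule ids[OF range_subgrp[OF ad(1)] range_subgrp[OF ad(2)]])
  have C2: "(kernel a01 = kernel (Nop p s1) \<and> range a10 = range (Nop p s1)) \<longleftrightarrow>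
     (range a01 \<inter> range a02 \<subseteq> {0} \<and> (\<forall>x. \<exists>a\<in>range a01. \<exists>b\<in>range a02. x = a + b))"
    unfolding N1 key1[OF ad(3) ad(1)] key2[OF ad(3) ad(1)] ex(3) by blast
  have C3: "(kernel a02 = kernel (one_minus t2) \<and> range a20 = range (one_minus t2)) \<longleftrightarrow>
     (range a01 \<inter> range a02 \<subseteq> {0} \<and> (\<forall>x. \<exists>a\<in>range a01. \<exists>b\<in>range a02. x = a + b))"
    unfolding T2 key1[OF ad(5) ad(2)] key2[OF ad(5) ad(2)] ex(6)
    by (metis Int_commute add.commute)
  have C4: "(kernel a01 = kernel (Nop p s1) \<and> range a10 = range (Nop p s1))
     \<or> (kernel a02 = kernel (one_minus t2) \<and> range a20 = range (one_minus t2))" (is "?X \<or> ?Y")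
    if "coh_trivial_S p s1 \<or> coh_trivial_S2 s2 t2"
    using that
  proof
      assume c: "coh_trivial_S p s1"
      then have c1: "kernel (\<lambda>x. a12 (a21 x)) = range (\<lambda>x. a10 (a01 x))"
        and c2: "range (\<lambda>x. a12 (a21 x)) = kernel (\<lambda>x. a10 (a01 x))"
        unfolding coh_trivial_S_def OS1 N1 by auto
      have "kernel a01 = kernel (\<lambda>x. a10 (a01 x))"
        using c2 add_props(1)[OF ad(3)] z(1) unfolding kernel_def by auto (metis (mono_tags, lifting) mem_Collect_eq rangeE rangeI)
      moreover have "range a10 = range (\<lambda>x. a10 (a01 x))"
      proof (intro subset_antisym subsetI)
        fix w assume "w \<in> range a10"
        then obtain x where x: "w = a10 x" by blast
        have "a12 (a21 w) = 0" using x z(6) add_props(1)[OF ad(4)] by simp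
        then have "w \<in> range (\<lambda>x. a10 (a01 x))" using c1 unfolding kernel_def by blast
        then show "w \<in> range (\<lambda>x. a10 (a01 x))" .
      qed blast
      ultimately have ?X unfolding N1 by blast
      then show "?X \<or> ?Y" ..
  next
      assume c: "coh_trivial_S2 s2 t2"
      then have c1: "range (\<lambda>x. a20 (a02 x)) = kernel (\<lambda>x. a21 (a12 x))"
        and c2: "range (\<lambda>x. a21 (a12 x)) = kernel (\<lambda>x. a20 (a02 x))"
        unfolding coh_trivial_S2_def OS2 T2 by auto
      have "kernel a02 = kernel (\<lambda>x. a20 (a02 x))"
        using c2 add_props(1)[OF ad(5)] z(2) unfolding kernel_def by auto (metis (mono_tags, lifting) mem_Collect_eq rangeE rangeI)
      moreover have "range a20 = range (\<lambda>x. a20 (a02 x))"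
      proof (intro subset_antisym subsetI)
        fix w assume "w \<in> range a20"
        then obtain x where x: "w = a20 x" by blast
        have "a21 (a12 w) = 0" using x z(4) add_props(1)[OF ad(6)] by simp
        then show "w \<in> range (\<lambda>x. a20 (a02 x))" using c1 unfolding kernel_def by blast
      qed blast
      ultimately have ?Y unfolding T2 by blast
      then show "?X \<or> ?Y" ..
  qed
  have E: "(coh_trivial_S p s1 \<or> coh_trivial_S2 s2 t2) \<longrightarrow>
            internal_direct_sum (range a01) (range a02)"
  proof
    assume h: "coh_trivial_S p s1 \<or> coh_trivial_S2 s2 t2"
    from C4[OF h] show "internal_direct_sum (range a01) (range a02)"
      unfolding D C2 C3 by blast
  qed
  show ?thesis using E unfolding C2 C3 D[symmetric] by blast
qed

end
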